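(* Let $0<p\leqslant q:=1-p$ and let $\phi^*$ be as in the context. Then for every $\sigma>-1$ and every $\varepsilon>0$, \[ |\phi^*(\sigma\pm it)| = O\left(e^{-(\pi/2-\varepsilon)|t|}\right),\qquad |t|\to\infty . \]
   Context: The random variables $X_n$ are defined by $X_0=0$ and $X_n \stackrel{d}{=} X_{I_n}+1$ for $n\geqslant 1$, where $(X_n)$ and $(I_n)$ are independent and $\mathbb{P}(I_n=k)=\binom{n}{k}\frac{p^kq^{n-k}-p^k(q-p)^{n-k}}{1-q^n}$ for $k=0,\dots,n-1$. Let $\tilde f_1(z):=e^{-z}\sum_{n\geqslant0}\mathbb{E}(X_n) z^n/n!$ and, for $\Re(s)>-1$, $\phi^*(s):=\int_0^\infty e^{-t}t^{s-1}\left(\tilde f_1\left(p^{-1}qt\right)-\tilde f_1(t)\right)dt$. *)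

theory Defs
  imports "HOL-Probability.Probability" "HOL-Library.Landau_Symbols"
begin

text \<open>Distribution of I_n: P(I_n = k) = C(n,k) (p^k q^(n-k) - p^k (q-p)^(n-k)) / (1 - q^n),
  k = 0..n-1, with q = 1 - p.  For 0 < p <= q these weights are nonnegative and sum to 1,
  so embed_pmf yields exactly this distribution.\<close>
definition I_weight :: "real \<Rightarrow> nat \<Rightarrow> nat \<Rightarrow> real" where
  "I_weight p n k = (if k < n then
     real (n choose k) * (p ^ k * (1 - p) ^ (n - k) - p ^ k * ((1 - p) - p) ^ (n - k))
       / (1 - (1 - p) ^ n) else 0)"

definition I_pmf :: "real \<Rightarrow> nat \<Rightarrow> nat pmf" where
  "I_pmf p n = embed_pmf (I_weight p n)"

text \<open>Law of X_n: X_0 = 0, X_n = X_{I_n} + 1 with X and I_n independent.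
  (On the support of I_n we have k < n, so min k n = k.)\<close>
fun X_pmf :: "real \<Rightarrow> nat \<Rightarrow> nat pmf" where
  "X_pmf p 0 = return_pmf 0"
| "X_pmf p (Suc n) = bind_pmf (I_pmf p (Suc n)) (\<lambda>k. map_pmf Suc (X_pmf p (min k n)))"

definition mean_X :: "real \<Rightarrow> nat \<Rightarrow> real" where
  "mean_X p n = measure_pmf.expectation (X_pmf p n) real"

definition f1 :: "real \<Rightarrow> complex \<Rightarrow> complex" where
  "f1 p z = exp (- z) * (\<Sum>n. complex_of_real (mean_X p n) * z ^ n / of_nat (fact n))"

definition phi_star :: "real \<Rightarrow> complex \<Rightarrow> complex" where
  "phi_star p s = integral {0<..} (\<lambda>t::real.
      complex_of_real (exp (- t)) * (complex_of_real t) powr (s - 1) *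
      (f1 p (complex_of_real ((1 - p) / p * t)) - f1 p (complex_of_real t)))"

end

theory Submission
  imports Defs "HOL-Complex_Analysis.Complex_Analysis" "HOL-Real_Asymp.Real_Asymp"
begin

lemma X_support: "set_pmf (X_pmf p n) \<subseteq> {..n}"
proof (induction n rule: less_induct)
  case (less n)
  show ?case
  proof (cases n)
    case 0 then show ?thesis by simp
  next
    case (Suc m)
    show ?thesis
    proof
      fix x assume "x \<in> set_pmf (X_pmf p n)"
      then obtain k where x: "x \<in> Suc ` set_pmf (X_pmf p (min k m))" using Suc by auto
      have "set_pmf (X_pmf p (min k m)) \<subseteq> {..min k m}"
        using less Suc by simp
      with x show "x \<in> {..n}" using Suc by auto
    qed
  qed
qed

lemma X_finite: "finite (set_pmf (X_pmf p n))"
  using X_support finite_subset by blast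

lemma mean_X_bounds: "0 \<le> mean_X p n" "mean_X p n \<le> real n"
proof -
  show "0 \<le> mean_X p n" unfolding mean_X_def by (rule Bochner_Integration.integral_nonneg) simp
  have "mean_X p n \<le> measure_pmf.expectation (X_pmf p n) (\<lambda>_. real n)"
    unfolding mean_X_def
    apply (rule integral_mono_AE)
    using X_support[of p n] by (auto simp: integrable_measure_pmf_finite X_finite AE_measure_pmf_iff)
  then show "mean_X p n \<le> real n" by simp
qed

lemma mean_X_0: "mean_X p 0 = 0"
  by (simp add: mean_X_def)

context
  fixes p :: real
  assumes p0: "0 < p" and pq: "p \<le> 1 - p"
begin

lemma q_pos: "0 < 1 - p" and q_lt1: "1 - p < 1" using p0 pq by auto

lemma qpow_lt1: "n \<ge> 1 \<Longrightarrow> (1 - p) ^ n < 1"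
  using q_pos q_lt1 by (subst power_less_one_iff) auto

lemma I_weight_nonneg: "0 \<le> I_weight p n k"
proof (cases "k < n")
  case True
  have "(1 - p) ^ n < 1" using True by (intro qpow_lt1) auto
  moreover have "((1 - p) - p) ^ (n - k) \<le> (1 - p) ^ (n - k)"
    using p0 pq by (intro power_mono) auto
  ultimately show ?thesis using True p0
    by (auto simp: I_weight_def intro!: divide_nonneg_pos mult_nonneg_nonneg)
qed (simp add: I_weight_def)

lemma binom_lt: "(\<Sum>k<n. real (n choose k) * a ^ k * b ^ (n - k)) = (a + b) ^ n - a ^ n"
proof -
  have "(a + b) ^ n = (\<Sum>k\<le>n. real (n choose k) * a ^ k * b ^ (n - k))"
    by (rule binomial_ring)
  also have "\<dots> = (\<Sum>k<n. real (n choose k) * a ^ k * b ^ (n - k)) + a ^ n"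
    by (simp add: lessThan_Suc_atMost[symmetric])
  finally show ?thesis by simp
qed

lemma I_weight_sum: "n \<ge> 1 \<Longrightarrow> (\<Sum>k<n. I_weight p n k) = 1"
proof -
  assume n: "n \<ge> 1"
  have D: "1 - (1 - p) ^ n \<noteq> 0"
    using n qpow_lt1[of n] by auto
  have "(\<Sum>k<n. I_weight p n k) = (\<Sum>k<n. (real (n choose k) * p ^ k * (1 - p) ^ (n - k)
          - real (n choose k) * p ^ k * ((1 - p) - p) ^ (n - k))) / (1 - (1 - p) ^ n)"
    unfolding I_weight_def sum_divide_distrib by (intro sum.cong) (auto simp: algebra_simps)
  also have "\<dots> = 1"
    unfolding sum_subtractf binom_lt using D by simp
  finally show ?thesis .
qed

lemma pmf_I: assumes "n \<ge> 1" shows "pmf (I_pmf p n) k = I_weight p n k"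
proof -
  have "(\<integral>\<^sup>+x. ennreal (I_weight p n x) \<partial>count_space UNIV) = (\<Sum>x<n. ennreal (I_weight p n x))"
    by (rule nn_integral_count_space') (auto simp: I_weight_def)
  also have "\<dots> = ennreal (\<Sum>x<n. I_weight p n x)"
    using I_weight_nonneg by (simp add: sum_ennreal)
  also have "\<dots> = 1" using I_weight_sum assms by simp
  finally show ?thesis unfolding I_pmf_def
    by (intro pmf_embed_pmf) (auto simp: I_weight_nonneg)
qed

lemma mean_rec: "mean_X p (Suc n) = (\<Sum>k<Suc n. I_weight p (Suc n) k * (1 + mean_X p k))"
proof -
  have supp: "set_pmf (I_pmf p (Suc n)) \<subseteq> {..<Suc n}"
    using pmf_I[of "Suc n"] by (auto simp: set_pmf_iff I_weight_def split: if_splits)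
  have "mean_X p (Suc n) = (\<Sum>a<Suc n. pmf (I_pmf p (Suc n)) a *\<^sub>R
           measure_pmf.expectation (map_pmf Suc (X_pmf p (min a n))) real)"
    unfolding mean_X_def X_pmf.simps
    by (rule pmf_expectation_bind) (use supp X_finite in auto)
  also have "\<dots> = (\<Sum>k<Suc n. I_weight p (Suc n) k * (1 + mean_X p k))"
  proof (intro sum.cong refl)
    fix k assume "k \<in> {..<Suc n}"
    then have k: "min k n = k" by simp
    have "measure_pmf.expectation (X_pmf p k) (\<lambda>x. real (Suc x)) =
          measure_pmf.expectation (X_pmf p k) (\<lambda>x. 1 + real x)" by simp
    also have "\<dots> = 1 + mean_X p k" unfolding mean_X_def
      by (subst Bochner_Integration.integral_add) (auto simp: integrable_measure_pmf_finite X_finite)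
    finally show "pmf (I_pmf p (Suc n)) k *\<^sub>R measure_pmf.expectation (map_pmf Suc (X_pmf p (min k n))) real
        = I_weight p (Suc n) k * (1 + mean_X p k)"
      using k pmf_I[of "Suc n" k] by simp
  qed
  finally show ?thesis .
qed

lemma mean_rec2: "(1 - (1-p)^n) * mean_X p n = (1 - (1-p)^n) +
   (\<Sum>k\<le>n. real (n choose k) * p ^ k * ((1-p) ^ (n - k) - ((1-p)-p) ^ (n - k)) * mean_X p k)"
proof (cases n)
  case 0 then show ?thesis by (simp add: mean_X_0)
next
  case (Suc m)
  have D: "1 - (1 - p) ^ n \<noteq> 0"
    using Suc qpow_lt1[of n] by auto
  have "mean_X p n = (\<Sum>k<n. I_weight p n k) + (\<Sum>k<n. I_weight p n k * mean_X p k)"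
    using mean_rec[of m] Suc by (simp add: algebra_simps sum.distrib)
  also have "\<dots> = 1 + (\<Sum>k<n. I_weight p n k * mean_X p k)"
    using I_weight_sum[of n] Suc by (simp del: sum.lessThan_Suc)
  finally have "(1 - (1-p)^n) * mean_X p n = (1 - (1-p)^n) + (\<Sum>k<n. (1 - (1-p)^n) * I_weight p n k * mean_X p k)"
    by (simp add: algebra_simps sum_distrib_left)
  also have "(\<Sum>k<n. (1 - (1-p)^n) * I_weight p n k * mean_X p k) =
     (\<Sum>k<n. real (n choose k) * p ^ k * ((1-p) ^ (n - k) - ((1-p)-p) ^ (n - k)) * mean_X p k)"
  proof (intro sum.cong refl)
    fix k assume "k \<in> {..<n}"
    then have "(1 - (1-p)^n) * I_weight p n k = real (n choose k) * (p ^ k * (1 - p) ^ (n - k) - p ^ k * ((1 - p) - p) ^ (n - k))"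
      using D by (simp add: I_weight_def)
    then have "(1 - (1-p)^n) * I_weight p n k * mean_X p k = real (n choose k) * (p ^ k * (1 - p) ^ (n - k) - p ^ k * ((1 - p) - p) ^ (n - k)) * mean_X p k"
      by simp
    also have "\<dots> = real (n choose k) * p ^ k * ((1-p) ^ (n - k) - ((1-p)-p) ^ (n - k)) * mean_X p k"
      by (simp add: algebra_simps)
    finally show "(1 - (1-p)^n) * I_weight p n k * mean_X p k = real (n choose k) * p ^ k * ((1-p) ^ (n - k) - ((1-p)-p) ^ (n - k)) * mean_X p k" .
  qed
  also have "\<dots> = (\<Sum>k\<le>n. real (n choose k) * p ^ k * ((1-p) ^ (n - k) - ((1-p)-p) ^ (n - k)) * mean_X p k)"
    by (simp add: lessThan_Suc_atMost[symmetric])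
  finally show ?thesis .
qed

end

lemma exp_sums_c: "(\<lambda>n. w ^ n / fact n) sums exp (w::complex)"
  using exp_converges[of w] by (simp add: scaleR_conv_of_real divide_inverse mult.commute)

lemma summable_coef:
  fixes c :: "nat \<Rightarrow> real"
  assumes c: "\<And>n. \<bar>c n\<bar> \<le> real n"
  shows "summable (\<lambda>n. norm (complex_of_real (c n) * w ^ n / fact n))"
proof (rule summable_comparison_test)
  show "summable (\<lambda>n. inverse (fact n) * (2 * norm w) ^ n)" by (rule summable_exp)
  show "\<exists>N. \<forall>n\<ge>N. norm (norm (complex_of_real (c n) * w ^ n / fact n)) \<le> inverse (fact n) * (2 * norm w) ^ n"
  proof (intro exI allI impI)
    fix n :: nat
    have "real n < 2 ^ n" using less_exp[of n] by (simp only: of_nat_less_numeral_power_cancel_iff)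
    then have "\<bar>c n\<bar> \<le> 2 ^ n" using c[of n] by linarith
    then have "\<bar>c n\<bar> * norm w ^ n \<le> 2 ^ n * norm w ^ n" by (intro mult_right_mono) auto
    then show "norm (norm (complex_of_real (c n) * w ^ n / fact n)) \<le> inverse (fact n) * (2 * norm w) ^ n"
      by (simp add: norm_mult norm_divide norm_power power_mult_distrib divide_simps)
  qed
qed

lemma cauchy_exp:
  fixes c :: "nat \<Rightarrow> real" and u v :: real
  assumes c: "\<And>n. \<bar>c n\<bar> \<le> real n"
  shows "(\<lambda>n. complex_of_real (\<Sum>k\<le>n. real (n choose k) * v ^ k * u ^ (n - k) * c k) * z ^ n / fact n)
     sums ((\<Sum>n. complex_of_real (c n) * (of_real v * z) ^ n / fact n) * exp (of_real u * z))"
proof -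
  let ?a = "\<lambda>n. complex_of_real (c n) * (of_real v * z) ^ n / fact n"
  let ?b = "\<lambda>n. (of_real u * z) ^ n / fact n"
  have sa: "summable (\<lambda>n. norm (?a n))" by (rule summable_coef[OF c])
  have sb: "summable (\<lambda>n. norm (?b n))"
  proof -
    have "summable (\<lambda>n. inverse (fact n) * norm (of_real u * z) ^ n)" by (rule summable_exp)
    moreover have "norm (?b n) = inverse (fact n) * norm (of_real u * z) ^ n" for n
      by (simp add: norm_mult norm_divide norm_power norm_fact norm_inverse divide_inverse mult.commute)
    ultimately show ?thesis by simp
  qed
  have "(\<lambda>n. \<Sum>k\<le>n. ?a k * ?b (n - k)) sums ((\<Sum>n. ?a n) * (\<Sum>n. ?b n))"
    by (rule Cauchy_product_sums[OF sa sb])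
  moreover have "(\<Sum>n. ?b n) = exp (of_real u * z)"
    using sums_unique[OF exp_sums_c[of "of_real u * z"]] by simp
  moreover have "(\<Sum>k\<le>n. ?a k * ?b (n - k)) =
      complex_of_real (\<Sum>k\<le>n. real (n choose k) * v ^ k * u ^ (n - k) * c k) * z ^ n / fact n" for n
  proof -
    have "(\<Sum>k\<le>n. ?a k * ?b (n - k)) = (\<Sum>k\<le>n. complex_of_real (real (n choose k) * v ^ k * u ^ (n - k) * c k) * z ^ n / fact n)"
    proof (intro sum.cong refl)
      fix k assume "k \<in> {..n}"
      then have k: "k \<le> n" by simp
      have zz: "z ^ k * z ^ (n - k) = z ^ n" using k by (simp add: power_add[symmetric])
      have b: "(of_nat (n choose k) :: complex) = fact n / (fact k * fact (n - k))"
        by (rule binomial_fact[OF k])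
      define F Fk Fnk where "F = (fact n :: complex)" "Fk = (fact k :: complex)" "Fnk = (fact (n - k) :: complex)"
      have nz: "F \<noteq> 0" "Fk \<noteq> 0" "Fnk \<noteq> 0" unfolding F_Fk_Fnk_def by simp_all
      define W where "W = complex_of_real (c k) * of_real v ^ k * of_real u ^ (n - k)"
      have L: "?a k * ?b (n - k) = W * (z ^ k * z ^ (n - k)) / (Fk * Fnk)"
        unfolding W_def F_Fk_Fnk_def by (simp add: power_mult_distrib mult_ac)
      have R: "complex_of_real (real (n choose k) * v ^ k * u ^ (n - k) * c k) * z ^ n / fact n
           = (F / (Fk * Fnk)) * W * z ^ n / F"
        unfolding W_def F_Fk_Fnk_def b[symmetric] by (simp add: mult_ac)
      show "?a k * ?b (n - k) = complex_of_real (real (n choose k) * v ^ k * u ^ (n - k) * c k) * z ^ n / fact n"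
        unfolding L R zz using nz by (simp add: field_simps)
    qed
    also have "\<dots> = complex_of_real (\<Sum>k\<le>n. real (n choose k) * v ^ k * u ^ (n - k) * c k) * z ^ n / fact n"
      by (simp add: sum_divide_distrib sum_distrib_right)
    finally show ?thesis .
  qed
  ultimately show ?thesis by simp
qed

definition Aser :: "real \<Rightarrow> complex \<Rightarrow> complex" where
  "Aser p z = (\<Sum>n. complex_of_real (mean_X p n) * z ^ n / of_nat (fact n))"

lemma mean_abs: "\<bar>mean_X p n\<bar> \<le> real n"
  using mean_X_bounds[of p n] by simp

lemma Aser_sums: "(\<lambda>n. complex_of_real (mean_X p n) * z ^ n / fact n) sums Aser p z"
  unfolding Aser_def using summable_coef[of "mean_X p" z, OF mean_abs]
  by (simp add: summable_norm_cancel summable_sums)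

lemma f1_Aser: "f1 p z = exp (- z) * Aser p z"
  by (simp add: f1_def Aser_def)

context
  fixes p :: real
  assumes p0: "0 < p" and pq: "p \<le> 1 - p"
begin

lemma Aser_eq: "Aser p z - Aser p (of_real (1-p) * z) =
   (exp z - exp (of_real (1-p) * z)) + Aser p (of_real p * z) * exp (of_real (1-p) * z)
    - Aser p (of_real p * z) * exp (of_real ((1-p)-p) * z)"
proof -
  let ?T = "\<lambda>n. z ^ n / fact n"
  have s1: "(\<lambda>n. complex_of_real (mean_X p n) * z ^ n / fact n - complex_of_real (mean_X p n) * (of_real (1-p) * z) ^ n / fact n)
     sums (Aser p z - Aser p (of_real (1-p) * z))"
    by (intro sums_diff Aser_sums)
  have s2: "(\<lambda>n. z ^ n / fact n - (of_real (1-p) * z) ^ n / fact n) sums (exp z - exp (of_real (1-p) * z))"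
    by (intro sums_diff exp_sums_c)
  have s3: "(\<lambda>n. complex_of_real (\<Sum>k\<le>n. real (n choose k) * p ^ k * (1-p) ^ (n - k) * mean_X p k) * z ^ n / fact n)
     sums (Aser p (of_real p * z) * exp (of_real (1-p) * z))"
    unfolding Aser_def of_nat_fact by (rule cauchy_exp[OF mean_abs])
  have s4: "(\<lambda>n. complex_of_real (\<Sum>k\<le>n. real (n choose k) * p ^ k * ((1-p)-p) ^ (n - k) * mean_X p k) * z ^ n / fact n)
     sums (Aser p (of_real p * z) * exp (of_real ((1-p)-p) * z))"
    unfolding Aser_def of_nat_fact by (rule cauchy_exp[OF mean_abs])
  note s5 = sums_diff[OF sums_add[OF s2 s3] s4]
  have eq: "(z ^ n / fact n - (of_real (1-p) * z) ^ n / fact n) +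
      complex_of_real (\<Sum>k\<le>n. real (n choose k) * p ^ k * (1-p) ^ (n - k) * mean_X p k) * z ^ n / fact n -
      complex_of_real (\<Sum>k\<le>n. real (n choose k) * p ^ k * ((1-p)-p) ^ (n - k) * mean_X p k) * z ^ n / fact n
    = complex_of_real (mean_X p n) * z ^ n / fact n - complex_of_real (mean_X p n) * (of_real (1-p) * z) ^ n / fact n" for n
  proof -
    define S1 where "S1 = (\<Sum>k\<le>n. real (n choose k) * p ^ k * (1-p) ^ (n - k) * mean_X p k)"
    define S2 where "S2 = (\<Sum>k\<le>n. real (n choose k) * p ^ k * ((1-p)-p) ^ (n - k) * mean_X p k)"
    define a where "a = mean_X p n"
    define X where "X = z ^ n / (fact n :: complex)"
    have r: "(1 - (1-p)^n) * a = (1 - (1-p)^n) + (S1 - S2)"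
      using mean_rec2[OF p0 pq, of n] unfolding S1_def S2_def a_def by (simp add: sum_subtractf algebra_simps)
    have qz: "(of_real (1-p) * z) ^ n / fact n = complex_of_real ((1-p)^n) * X"
      unfolding X_def by (simp add: power_mult_distrib)
    have qz2: "\<And>c. c * (of_real (1-p) * z) ^ n / fact n = c * (complex_of_real ((1-p)^n) * X)"
      using qz by (metis times_divide_eq_right)
    have "(z ^ n / fact n - (of_real (1-p) * z) ^ n / fact n) + complex_of_real S1 * z ^ n / fact n
         - complex_of_real S2 * z ^ n / fact n = complex_of_real ((1 - (1-p)^n) + (S1 - S2)) * X"
    proof -
      have x1: "z ^ n / fact n = X" and x2: "\<And>c. c * z ^ n / fact n = c * X" unfolding X_def by simp_all
      show ?thesis unfolding qz qz2 x1 x2 by (simp add: algebra_simps)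
    qed
    also have "\<dots> = complex_of_real ((1 - (1-p)^n) * a) * X" using r by simp
    also have "\<dots> = complex_of_real a * z ^ n / fact n - complex_of_real a * (of_real (1-p) * z) ^ n / fact n"
    proof -
      have x1: "z ^ n / fact n = X" and x2: "\<And>c. c * z ^ n / fact n = c * X" unfolding X_def by simp_all
      show ?thesis unfolding qz qz2 x1 x2 by (simp add: algebra_simps)
    qed
    finally show ?thesis unfolding S1_def S2_def a_def .
  qed
  have "(\<lambda>n. complex_of_real (mean_X p n) * z ^ n / fact n - complex_of_real (mean_X p n) * (of_real (1-p) * z) ^ n / fact n)
     sums ((exp z - exp (of_real (1-p) * z)) + Aser p (of_real p * z) * exp (of_real (1-p) * z)
    - Aser p (of_real p * z) * exp (of_real ((1-p)-p) * z))"
    using s5 unfolding eq .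
  then show ?thesis by (rule sums_unique2[OF s1])
qed

lemma funeq_alg:
  fixes ez ew E F Fq Fw :: complex
  assumes "ez \<noteq> 0" "ew * E = 1"
    "ez * F - ez * E * Fq = (ez - ez * E) + ew * Fw * (ez * E) - ew * Fw * (ez * E * E)"
  shows "F = E * Fq + (1 - E) * (1 + Fw)"
proof -
  have "ew * Fw * (ez * E) = ez * Fw * (ew * E)" by (simp add: mult_ac)
  then have 1: "ew * Fw * (ez * E) = ez * Fw" using assms(2) by simp
  have "ew * Fw * (ez * E * E) = (ew * Fw * (ez * E)) * E" by (simp add: mult_ac)
  then have 2: "ew * Fw * (ez * E * E) = ez * Fw * E" using 1 by simp
  have "ez * F = ez * (E * Fq + (1 - E) * (1 + Fw))"
    using assms(3) unfolding 1 2 by (simp add: algebra_simps)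
  then show ?thesis using assms(1) by simp
qed

lemma f1_funeq: "f1 p z = exp (- of_real p * z) * f1 p (of_real (1-p) * z)
     + (1 - exp (- of_real p * z)) * (1 + f1 p (of_real p * z))"
proof -
  have A: "Aser p w = exp w * f1 p w" for w
    by (simp add: f1_Aser exp_minus)
  have e1: "exp (of_real (1-p) * z) = exp z * exp (- of_real p * z)"
    by (simp add: exp_add[symmetric] algebra_simps)
  have e3: "exp (of_real ((1-p)-p) * z) = exp z * exp (- of_real p * z) * exp (- of_real p * z)"
    by (simp add: exp_add[symmetric] algebra_simps)
  have e4: "exp (of_real p * z) * exp (- of_real p * z) = 1"
    by (simp add: exp_add[symmetric])
  show ?thesis
    apply (rule funeq_alg[OF exp_not_eq_zero[of z] e4])
    using Aser_eq[of z] unfolding A e1 e3 by (simp add: algebra_simps)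
qed

end

lemma Aser_norm: "norm (Aser p z) \<le> norm z * exp (norm z)"
proof -
  let ?t = "\<lambda>n. complex_of_real (mean_X p n) * z ^ n / fact n"
  let ?h = "\<lambda>n. if n = 0 then 0 else norm z ^ n / fact (n - 1)"
  have sn: "summable (\<lambda>n. norm (?t n))" using summable_coef[of "mean_X p" z, OF mean_abs] .
  have hs: "(\<lambda>m. ?h (Suc m)) sums (norm z * exp (norm z))"
  proof -
    have "(\<lambda>m. norm z * (norm z ^ m / fact m)) sums (norm z * exp (norm z))"
      using exp_converges[of "norm z"] by (intro sums_mult) (simp add: divide_inverse mult.commute)
    then show ?thesis by simp
  qed
  then have hs': "?h sums (norm z * exp (norm z))"
    using sums_Suc_iff[of ?h "norm z * exp (norm z)"] by simp
  have le: "norm (?t n) \<le> ?h n" for n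
  proof -
    have nt: "norm (?t n) = mean_X p n * norm z ^ n / fact n"
      using mean_X_bounds[of p n] by (simp add: norm_mult norm_divide norm_power norm_fact)
    show ?thesis
  proof (cases n)
    case 0 then show ?thesis using nt by (simp add: mean_X_0)
  next
    case (Suc m)
    have "mean_X p n * norm z ^ n \<le> real n * norm z ^ n"
      using mean_X_bounds[of p n] by (intro mult_right_mono) auto
    moreover have "real n * norm z ^ n / fact n = norm z ^ n / fact m"
      using Suc by (simp add: fact_Suc divide_simps)
    ultimately have "mean_X p n * norm z ^ n / fact n \<le> norm z ^ n / fact m"
      by (metis divide_right_mono fact_ge_zero)
    then show ?thesis using Suc nt by simp
  qed
  qed
  have "norm (Aser p z) \<le> (\<Sum>n. norm (?t n))"
    unfolding Aser_def of_nat_fact by (rule summable_norm[OF sn])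
  also have "\<dots> \<le> (\<Sum>n. ?h n)"
    using le sn hs' by (intro suminf_le) (auto simp: sums_summable)
  also have "\<dots> = norm z * exp (norm z)" using sums_unique[OF hs'] by simp
  finally show ?thesis .
qed

lemma f1_base: "Re z \<ge> 0 \<Longrightarrow> norm (f1 p z) \<le> norm z * exp (norm z)"
proof -
  assume "Re z \<ge> 0"
  then have "norm (exp (- z)) \<le> 1" by simp
  then have "norm (f1 p z) \<le> 1 * norm (Aser p z)"
    unfolding f1_Aser norm_mult by (intro mult_right_mono) auto
  then show ?thesis using Aser_norm[of p z] by simp
qed

context
  fixes p :: real
  assumes p0: "0 < p" and pq: "p \<le> 1 - p"
begin

lemma f1_growth:
  assumes eta: "\<eta> > 0"
  shows "\<exists>C>0. \<forall>z. Re z \<ge> 0 \<longrightarrow> norm (f1 p z) \<le> C * norm z * exp (\<eta> * norm z)"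
proof -
  define q where "q = 1 - p"
  have q: "0 < q" "q < 1" "p \<le> q" "p + q = 1" using p0 pq by (auto simp: q_def)
  define R0 where "R0 = max 1 (ln 3 / (\<eta> * p))"
  define C where "C = max (exp R0) (2 / R0)"
  have R0: "R0 \<ge> 1" "ln 3 \<le> \<eta> * p * R0"
    using eta p0 by (auto simp: R0_def field_simps max_def)
  have C: "C > 0" "exp R0 \<le> C" "2 \<le> C * R0" using R0 by (auto simp: C_def max_def field_simps)
  have P: "\<forall>z. Re z \<ge> 0 \<longrightarrow> norm z \<le> R0 / q ^ n \<longrightarrow> norm (f1 p z) \<le> C * norm z * exp (\<eta> * norm z)" for n
  proof (induction n)
    have base: "norm (f1 p z) \<le> C * norm z * exp (\<eta> * norm z)" if "Re z \<ge> 0" "norm z \<le> R0" for z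
    proof -
      have "norm (f1 p z) \<le> norm z * exp (norm z)" by (rule f1_base[OF that(1)])
      also have "\<dots> \<le> norm z * C"
      proof (intro mult_left_mono)
        show "exp (norm z) \<le> C" using that(2) C(2) by (meson exp_le_cancel_iff order_trans)
      qed simp
      also have "\<dots> = C * norm z * 1" by simp
      also have "\<dots> \<le> C * norm z * exp (\<eta> * norm z)" using C eta by (intro mult_left_mono) auto
      finally show ?thesis .
    qed
    {
      case 0 show ?case using base by simp
    next
      case (Suc n)
      show ?case
      proof (intro allI impI)
        fix z assume z: "Re z \<ge> 0" "norm z \<le> R0 / q ^ Suc n"
        show "norm (f1 p z) \<le> C * norm z * exp (\<eta> * norm z)"
        proof (cases "norm z \<le> R0")
          case True then show ?thesis using base z by simp
        next
          case False
          define r where "r = norm z"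
          have r: "r > R0" using False r_def by simp
          have qz: "norm (of_real q * z) = q * r" "Re (of_real q * z) \<ge> 0"
            using q z by (auto simp: r_def norm_mult)
          have pz: "norm (of_real p * z) = p * r" "Re (of_real p * z) \<ge> 0"
            using p0 z by (auto simp: r_def norm_mult)
          have hq: "q * r \<le> R0 / q ^ n" using z q by (simp add: r_def field_simps)
          have "norm (f1 p (of_real q * z)) \<le> C * norm (of_real q * z) * exp (\<eta> * norm (of_real q * z))"
            by (rule Suc.IH[rule_format, OF qz(2)]) (use qz(1) hq in simp)
          then have Fq: "norm (f1 p (of_real q * z)) \<le> C * (q * r) * exp (\<eta> * (q * r))"
            unfolding qz(1) .
          have "p * r \<le> q * r" using q r R0 by (intro mult_right_mono) auto
          then have hp: "p * r \<le> R0 / q ^ n" using hq by linarith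
          have "norm (f1 p (of_real p * z)) \<le> C * norm (of_real p * z) * exp (\<eta> * norm (of_real p * z))"
            by (rule Suc.IH[rule_format, OF pz(2)]) (use pz(1) hp in simp)
          then have Fp: "norm (f1 p (of_real p * z)) \<le> C * (p * r) * exp (\<eta> * (p * r))"
            unfolding pz(1) .
          define E where "E = exp (\<eta> * (q * r))"
          have E1: "E \<ge> 1" using eta q r R0 by (simp add: E_def)
          have Ep: "exp (\<eta> * (p * r)) \<le> E" unfolding E_def exp_le_cancel_iff using eta q r R0
            by (intro mult_left_mono) (auto intro: mult_right_mono)
          have e1: "norm (exp (- of_real p * z)) \<le> 1" using pz by simp
          have e2: "norm (1 - exp (- of_real p * z)) \<le> 2"
            using e1 norm_triangle_ineq4[of 1 "exp (- of_real p * z)"] by (simp only: norm_one)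
          have n1: "norm (1 + f1 p (of_real p * z)) \<le> 1 + norm (f1 p (of_real p * z))"
            using norm_triangle_ineq[of 1 "f1 p (of_real p * z)"] by (simp only: norm_one)
          have "norm (f1 p z) \<le> norm (exp (- of_real p * z) * f1 p (of_real q * z))
             + norm ((1 - exp (- of_real p * z)) * (1 + f1 p (of_real p * z)))"
            by (subst f1_funeq[OF p0 pq, of z]) (simp only: q_def norm_triangle_ineq)
          also have "\<dots> = norm (exp (- of_real p * z)) * norm (f1 p (of_real q * z))
             + norm (1 - exp (- of_real p * z)) * norm (1 + f1 p (of_real p * z))"
            by (simp only: norm_mult)
          also have "\<dots> \<le> norm (exp (- of_real p * z)) * norm (f1 p (of_real q * z))
             + norm (1 - exp (- of_real p * z)) * (1 + norm (f1 p (of_real p * z)))"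
            using n1 by (intro add_left_mono mult_left_mono) auto
          also have "\<dots> \<le> 1 * (C * (q * r) * E) + 2 * (1 + C * (p * r) * E)"
          proof (intro add_mono mult_mono)
            show "norm (f1 p (of_real q * z)) \<le> C * (q * r) * E" using Fq by (simp add: E_def)
            have "C * (p * r) * exp (\<eta> * (p * r)) \<le> C * (p * r) * E"
              using Ep C p0 r R0 by (intro mult_left_mono) auto
            then show "norm (f1 p (of_real p * z)) \<le> C * (p * r) * E"
              using Fp by linarith
          qed (use e1 e2 C q r R0 E1 in auto)
          also have "\<dots> = C * r * E * (q + 2 * p) + 2" by (simp add: algebra_simps)
          also have "\<dots> \<le> C * r * E * 2 + C * r * E"
          proof (intro add_mono mult_left_mono)
            show "q + 2 * p \<le> 2" using q by simp
            show "0 \<le> C * r * E" using C r R0 E1 by simp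
            have "C * R0 \<le> C * r" using C r by (intro mult_left_mono) auto
            then have "2 \<le> C * r" using C by linarith
            moreover have "C * r * 1 \<le> C * r * E" using E1 C r R0 by (intro mult_left_mono) auto
            ultimately show "2 \<le> C * r * E" by linarith
          qed
          also have "\<dots> = C * r * (3 * E)" by simp
          also have "\<dots> \<le> C * r * exp (\<eta> * r)"
          proof (intro mult_left_mono)
            have "3 \<le> exp (\<eta> * (p * r))"
            proof -
              have "\<eta> * p * R0 \<le> \<eta> * p * r" using r eta p0 by (intro mult_left_mono) auto
              then have "ln 3 \<le> \<eta> * (p * r)" using R0 by (simp add: mult.assoc)
              then have "exp (ln 3) \<le> exp (\<eta> * (p * r))" by (subst exp_le_cancel_iff)
              then show ?thesis by simp
            qed
            moreover have "exp (\<eta> * r) = E * exp (\<eta> * (p * r))"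
            proof -
              have "\<eta> * (q * r) + \<eta> * (p * r) = \<eta> * r * (p + q)" by (simp add: algebra_simps)
              then have "\<eta> * r = \<eta> * (q * r) + \<eta> * (p * r)" using q(4) by simp
              then show ?thesis unfolding E_def by (simp add: exp_add[symmetric])
            qed
            ultimately show "3 * E \<le> exp (\<eta> * r)" using E1 by (simp add: mult.commute)
            show "0 \<le> C * r" using C r R0 by simp
          qed
          finally show ?thesis by (simp add: r_def)
        qed
      qed
    }
  qed
  show ?thesis
  proof (intro exI conjI allI impI)
    show "C > 0" by (rule C)
    fix z assume z: "Re z \<ge> 0"
    obtain n where "q ^ n < R0 / (norm z + 1)"
    proof -
      have "0 < R0 / (norm z + 1)" using R0 by (intro divide_pos_pos) (auto intro: add_nonneg_pos)
      then show ?thesis using real_arch_pow_inv[of "R0 / (norm z + 1)" q] q that by blast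
    qed
    moreover have pos: "0 < norm z + 1" by (simp add: add_nonneg_pos)
    ultimately have "q ^ n * (norm z + 1) < R0" unfolding pos_less_divide_eq[OF pos] by blast
    moreover have "q ^ n * norm z \<le> q ^ n * (norm z + 1)" using q by (intro mult_left_mono) auto
    ultimately have "norm z * q ^ n \<le> R0" by (simp add: mult.commute)
    then have "norm z \<le> R0 / q ^ n" using q by (simp add: pos_le_divide_eq)
    then show "norm (f1 p z) \<le> C * norm z * exp (\<eta> * norm z)" using P z by blast
  qed
qed

end

lemma Aser_deriv: "\<exists>D. (Aser p has_field_derivative D) (at z)"
proof -
  define c where "c = (\<lambda>n. complex_of_real (mean_X p n) / fact n)"
  have eq: "Aser p = (\<lambda>z. \<Sum>n. c n * z ^ n)"
    by (rule ext) (simp add: Aser_def c_def)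
  have "summable (\<lambda>n. c n * y ^ n)" for y
    using Aser_sums[of p y] by (simp add: c_def sums_summable)
  from termdiffs_strong_converges_everywhere[of c z, OF this] show ?thesis
    unfolding eq by blast
qed

lemma Aser_holo: "Aser p holomorphic_on S"
  unfolding holomorphic_on_def
  by (metis Aser_deriv field_differentiable_at_within field_differentiable_def)

lemma f1_holo: "f1 p holomorphic_on S"
proof -
  have "f1 p = (\<lambda>z. exp (- z) * Aser p z)" by (rule ext) (simp add: f1_Aser)
  then show ?thesis by (simp add: holomorphic_intros Aser_holo)
qed

definition gfun :: "real \<Rightarrow> complex \<Rightarrow> complex" where
  "gfun p z = exp (- z) * (f1 p (of_real ((1 - p) / p) * z) - f1 p z)"

definition hfun :: "real \<Rightarrow> complex \<Rightarrow> complex \<Rightarrow> complex" where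
  "hfun p s z = z powr (s - 1) * gfun p z"

lemma gfun_holo: "gfun p holomorphic_on S"
proof -
  have "f1 p \<circ> (\<lambda>z. of_real ((1 - p) / p) * z) holomorphic_on S"
    by (intro holomorphic_on_compose holomorphic_intros f1_holo)
  then have "(\<lambda>z. f1 p (of_real ((1 - p) / p) * z)) holomorphic_on S" by (simp add: o_def)
  then show ?thesis unfolding gfun_def by (intro holomorphic_intros f1_holo)
qed

lemma hfun_holo: "hfun p s holomorphic_on {z. Re z > 0}"
  unfolding hfun_def
  by (intro holomorphic_intros gfun_holo) (auto simp: complex_nonpos_Reals_iff)

lemma hfun_cont: "continuous_on {z. Re z > 0} (hfun p s)"
  by (rule holomorphic_on_imp_continuous_on[OF hfun_holo])

context
  fixes p :: real
  assumes p0: "0 < p" and pq: "p \<le> 1 - p"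
begin

lemma g_bound:
  assumes kap: "0 < \<kappa>"
  shows "\<exists>K>0. \<forall>z. \<kappa> * norm z \<le> Re z \<longrightarrow> norm (gfun p z) \<le> K * norm z * exp (-(\<kappa>/2) * norm z)"
proof -
  define c where "c = (1 - p) / p"
  have c: "c > 0" using p0 pq by (simp add: c_def)
  define \<eta> where "\<eta> = \<kappa> / (2 * (1 + c))"
  have eta: "\<eta> > 0" using kap c by (simp add: \<eta>_def)
  have etac: "\<eta> * c \<le> \<kappa> / 2" "\<eta> \<le> \<kappa> / 2" using kap c by (auto simp: \<eta>_def field_simps)
  obtain C where C: "C > 0" "\<And>z. Re z \<ge> 0 \<Longrightarrow> norm (f1 p z) \<le> C * norm z * exp (\<eta> * norm z)"
    using f1_growth[OF p0 pq eta] by blast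
  show ?thesis
  proof (intro exI conjI allI impI)
    show "C * (1 + c) > 0" using C c by simp
    fix z assume z: "\<kappa> * norm z \<le> Re z"
    define r where "r = norm z"
    have r: "r \<ge> 0" by (simp add: r_def)
    have Rez: "Re z \<ge> 0" using z kap by (smt (verit) mult_nonneg_nonneg norm_ge_zero)
    have "norm (f1 p (of_real c * z)) \<le> C * norm (of_real c * z) * exp (\<eta> * norm (of_real c * z))"
      using C(2)[of "of_real c * z"] Rez c by simp
    also have "\<dots> = C * c * r * exp (\<eta> * c * r)" using c by (simp add: norm_mult r_def mult_ac)
    also have "\<dots> \<le> C * c * r * exp (\<kappa> / 2 * r)"
    proof (intro mult_left_mono)
      have "\<eta> * c * r \<le> \<kappa> / 2 * r" using etac r by (intro mult_right_mono) auto
      then show "exp (\<eta> * c * r) \<le> exp (\<kappa> / 2 * r)" by simp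
    qed (use C c r in auto)
    finally have F1: "norm (f1 p (of_real c * z)) \<le> C * c * r * exp (\<kappa> / 2 * r)" .
    have "norm (f1 p z) \<le> C * r * exp (\<eta> * r)" using C(2)[OF Rez] by (simp add: r_def)
    also have "\<dots> \<le> C * r * exp (\<kappa> / 2 * r)"
    proof (intro mult_left_mono)
      have "\<eta> * r \<le> \<kappa> / 2 * r" using etac r by (intro mult_right_mono) auto
      then show "exp (\<eta> * r) \<le> exp (\<kappa> / 2 * r)" by simp
    qed (use C r in auto)
    finally have F2: "norm (f1 p z) \<le> C * r * exp (\<kappa> / 2 * r)" .
    have ez: "norm (exp (- z)) \<le> exp (- (\<kappa> * r))" using z by (simp add: r_def)
    have "norm (gfun p z) = norm (exp (- z)) * norm (f1 p (of_real c * z) - f1 p z)"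
      by (simp add: gfun_def c_def norm_mult)
    also have "\<dots> \<le> exp (- (\<kappa> * r)) * (C * c * r * exp (\<kappa> / 2 * r) + C * r * exp (\<kappa> / 2 * r))"
      using F1 F2 ez norm_triangle_ineq4[of "f1 p (of_real c * z)" "f1 p z"]
      by (intro mult_mono) auto
    also have "\<dots> = C * (1 + c) * r * (exp (- (\<kappa> * r)) * exp (\<kappa> / 2 * r))"
      by (simp add: algebra_simps)
    also have "exp (- (\<kappa> * r)) * exp (\<kappa> / 2 * r) = exp (-(\<kappa>/2) * r)"
      by (simp add: exp_add[symmetric])
    finally show "norm (gfun p z) \<le> C * (1 + c) * norm z * exp (-(\<kappa>/2) * norm z)"
      by (simp add: r_def)
  qed
qed

lemma h_bound:
  assumes K: "\<And>z. \<kappa> * norm z \<le> Re z \<Longrightarrow> norm (gfun p z) \<le> K * norm z * exp (-(\<kappa>/2) * norm z)"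
    and z: "\<kappa> * norm z \<le> Re z" "z \<noteq> 0" and K0: "K \<ge> 0"
  shows "norm (hfun p s z) \<le> K * norm z powr Re s * exp (- Im s * Arg z) * exp (-(\<kappa>/2) * norm z)"
proof -
  have "norm (hfun p s z) = norm z powr (Re s - 1) * exp (- Im s * Arg z) * norm (gfun p z)"
    by (simp add: hfun_def norm_mult norm_powr_complex)
  also have "\<dots> \<le> norm z powr (Re s - 1) * exp (- Im s * Arg z) * (K * norm z * exp (-(\<kappa>/2) * norm z))"
    using K[OF z(1)] by (intro mult_left_mono) auto
  also have "\<dots> = K * (norm z powr (Re s - 1) * norm z) * exp (- Im s * Arg z) * exp (-(\<kappa>/2) * norm z)"
    by (simp add: mult_ac)
  also have "norm z powr (Re s - 1) * norm z = norm z powr Re s"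
  proof -
    have "norm z powr (Re s - 1) * norm z powr 1 = norm z powr (Re s - 1 + 1)" by (rule powr_add[symmetric])
    then show ?thesis using z(2) by simp
  qed
  finally show ?thesis .
qed

end

definition Fray :: "real \<Rightarrow> complex \<Rightarrow> complex \<Rightarrow> real \<Rightarrow> complex" where
  "Fray p s w x = hfun p s (w * of_real x) * w"

lemma lebesgue_Ioi: "{0::real<..} \<in> sets lebesgue" by simp

lemma G_integrable:
  assumes "Re s > -1" "a > 0"
  shows "(\<lambda>x::real. x powr Re s * exp (- a * x)) integrable_on {0<..}"
proof -
  have "(\<lambda>t. complex_of_real t powr (of_real (Re s + 1) - 1) / of_real (exp (a * t))) absolutely_integrable_on {0<..}"
    using assms by (intro absolutely_integrable_Gamma_integral) auto
  then have "(\<lambda>t. norm (complex_of_real t powr (of_real (Re s + 1) - 1) / of_real (exp (a * t)))) integrable_on {0<..}"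
    unfolding absolutely_integrable_on_def by blast
  then show ?thesis
  proof (rule integrable_eq)
    fix x :: real assume x: "x \<in> {0<..}"
    have "norm (complex_of_real x powr (of_real (Re s + 1) - 1)) = x powr Re s"
      using x by (subst norm_powr_real_powr) auto
    then show "norm (complex_of_real x powr (of_real (Re s + 1) - 1) / of_real (exp (a * x))) = x powr Re s * exp (- a * x)"
      by (simp add: norm_divide exp_minus divide_inverse norm_mult norm_inverse)
  qed
qed

locale rayctx =
  fixes p :: real and s w :: complex and \<kappa> K :: real
  assumes p0: "0 < p" and pq: "p \<le> 1 - p"
    and sig: "Re s > -1"
    and w1: "norm w = 1" and kap: "0 < \<kappa>" "\<kappa> \<le> Re w"
    and K0: "K > 0"
    and Kb: "\<And>z. \<kappa> * norm z \<le> Re z \<Longrightarrow> norm (gfun p z) \<le> K * norm z * exp (-(\<kappa>/2) * norm z)"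
begin

lemma kap1: "\<kappa> \<le> 1"
  using kap complex_Re_le_cmod[of w] w1 by linarith

lemma Fray_cont: "continuous_on {0<..} (Fray p s w)"
proof -
  have "continuous_on {0<..} (\<lambda>x::real. hfun p s (w * of_real x))"
    by (rule continuous_on_compose2[OF hfun_cont]) (use kap in \<open>auto intro!: continuous_intros\<close>)
  then show ?thesis unfolding Fray_def by (intro continuous_intros) auto
qed

lemma Gi: "(\<lambda>x. x powr Re s * exp (- (\<kappa>/2) * x)) integrable_on {0<..}"
  using G_integrable[OF sig, of "\<kappa>/2"] kap by simp

lemma Bi: "(\<lambda>x. K * exp (- Im s * Arg w) * (x powr Re s * exp (- (\<kappa>/2) * x))) integrable_on {0<..}"
  using integrable_cmul[OF Gi, of "K * exp (- Im s * Arg w)"] by simp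

lemma Fray_bound:
  assumes x: "x > 0"
  shows "norm (Fray p s w x) \<le> K * exp (- Im s * Arg w) * (x powr Re s * exp (- (\<kappa>/2) * x))"
proof -
  have nz: "norm (w * of_real x) = x" using w1 x by (simp add: norm_mult)
  have "\<kappa> * norm (w * of_real x) \<le> Re (w * of_real x)"
    unfolding nz using kap x by simp
  moreover have "w * of_real x \<noteq> 0" using w1 x by auto
  ultimately have
    "norm (hfun p s (w * of_real x)) \<le> K * norm (w * of_real x) powr Re s * exp (- Im s * Arg (w * of_real x)) *
      exp (- (\<kappa> / 2) * norm (w * of_real x))"
    using h_bound[OF p0 pq Kb, where z = "w * of_real x" and s = s] K0 by simp
  then show ?thesis using x w1 unfolding Fray_def nz by (simp add: norm_mult mult_ac)
qed

lemma Fray_integrable: "Fray p s w integrable_on {0<..}"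
proof (rule measurable_bounded_by_integrable_imp_integrable)
  show "Fray p s w \<in> borel_measurable (lebesgue_on {0<..})"
    by (rule continuous_imp_measurable_on_sets_lebesgue[OF Fray_cont lebesgue_Ioi])
  show "(\<lambda>x. K * exp (- Im s * Arg w) * (x powr Re s * exp (- (\<kappa>/2) * x))) integrable_on {0<..}"
    by (rule Bi)
qed (use Fray_bound lebesgue_Ioi in auto)

lemma Fray_integral_bound:
  "norm (integral {0<..} (Fray p s w)) \<le> K * exp (- Im s * Arg w) * integral {0<..} (\<lambda>x. x powr Re s * exp (- (\<kappa>/2) * x))"
proof -
  have "norm (integral {0<..} (Fray p s w)) \<le> integral {0<..} (\<lambda>x. K * exp (- Im s * Arg w) * (x powr Re s * exp (- (\<kappa>/2) * x)))"
    using Fray_bound by (intro integral_norm_bound_integral Fray_integrable Bi) auto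
  also have "\<dots> = K * exp (- Im s * Arg w) * integral {0<..} (\<lambda>x. x powr Re s * exp (- (\<kappa>/2) * x))"
    by simp
  finally show ?thesis .
qed

lemma Fray_lim:
  "(\<lambda>n. integral {1 / real (Suc n)..real (Suc n)} (Fray p s w)) \<longlonglongrightarrow> integral {0<..} (Fray p s w)"
proof -
  define f where "f = (\<lambda>n x. if x \<in> {1 / real (Suc n)..real (Suc n)} then Fray p s w x else 0)"
  have sub: "{1 / real (Suc n)..real (Suc n)} \<inter> {0<..} = {1 / real (Suc n)..real (Suc n)}" for n
    by (auto intro: less_le_trans[of 0 "1 / real (Suc n)"])
  have cont: "continuous_on {1 / real (Suc n)..real (Suc n)} (Fray p s w)" for n
    by (rule continuous_on_subset[OF Fray_cont]) (auto intro: less_le_trans[of 0 "1 / real (Suc n)"])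
  have fi: "f n integrable_on {0<..}" for n
    unfolding f_def integrable_restrict_Int sub by (rule integrable_continuous_interval[OF cont])
  have fint: "integral {0<..} (f n) = integral {1 / real (Suc n)..real (Suc n)} (Fray p s w)" for n
    unfolding f_def integral_restrict_Int sub ..
  have "(\<lambda>n. integral {0<..} (f n)) \<longlonglongrightarrow> integral {0<..} (Fray p s w)"
  proof (rule dominated_convergence(2)[OF fi])
    show "(\<lambda>x. K * exp (- Im s * Arg w) * (x powr Re s * exp (- (\<kappa>/2) * x))) integrable_on {0<..}"
      by (rule Bi)
    show "norm (f n x) \<le> K * exp (- Im s * Arg w) * (x powr Re s * exp (- (\<kappa>/2) * x))" if "x \<in> {0<..}" for n x
      using Fray_bound[of x] that K0 by (auto simp: f_def)
    show "(\<lambda>n. f n x) \<longlonglongrightarrow> Fray p s w x" if "x \<in> {0<..}" for x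
    proof (rule tendsto_eventually)
      have x: "x > 0" using that by simp
      obtain N1 where N1: "real N1 > x" using reals_Archimedean2 by blast
      obtain N2 where N2: "1 / real (Suc N2) < x" using x
        by (metis Suc_eq_plus1 nat_approx_posE)
      show "\<forall>\<^sub>F n in sequentially. f n x = Fray p s w x"
      proof (rule eventually_sequentiallyI[of "N1 + N2"])
        fix n assume n: "N1 + N2 \<le> n"
        have "real (Suc n) \<ge> real N1" using n by simp
        moreover have "1 / real (Suc n) \<le> 1 / real (Suc N2)" using n by (intro divide_left_mono) auto
        ultimately show "f n x = Fray p s w x" using N1 N2 by (auto simp: f_def)
      qed
    qed
  qed
  then show ?thesis unfolding fint .
qed

end

context rayctx
begin

definition Bseg :: "real \<Rightarrow> real" where
  "Bseg b = K * ((\<kappa> * b) powr Re s + b powr Re s) * exp (\<bar>Im s\<bar> * pi) * exp (- (\<kappa>/2) * (\<kappa> * b))"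

lemma seg_props:
  assumes b: "b > 0" and z: "z \<in> closed_segment (of_real b) (of_real b * w)"
  shows "b * \<kappa> \<le> Re z" "norm z \<le> b" "\<kappa> * norm z \<le> Re z"
proof -
  obtain u where u: "0 \<le> u" "u \<le> 1" "z = (1 - u) *\<^sub>R of_real b + u *\<^sub>R (of_real b * w)"
    using z in_segment(1) by blast
  have "Re z = (1 - u) * b + u * (b * Re w)" using u(3) by simp
  also have "\<dots> \<ge> (1 - u) * (b * \<kappa>) + u * (b * \<kappa>)"
    using u b kap kap1 by (intro add_mono mult_left_mono mult_right_mono) auto
  finally show 1: "b * \<kappa> \<le> Re z" by (simp add: algebra_simps)
  have "norm z \<le> norm ((1 - u) *\<^sub>R complex_of_real b) + norm (u *\<^sub>R (of_real b * w))"
    unfolding u(3) by (rule norm_triangle_ineq)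
  also have "\<dots> = (1 - u) * b + u * b" using u b w1 by (simp add: norm_mult)
  finally show 2: "norm z \<le> b" by (simp add: algebra_simps)
  have "\<kappa> * norm z \<le> \<kappa> * b" using 2 kap by (intro mult_left_mono) auto
  then show "\<kappa> * norm z \<le> Re z" using 1 by (simp add: mult.commute)
qed

lemma seg_h_bound:
  assumes b: "b > 0" and z: "z \<in> closed_segment (of_real b) (of_real b * w)"
  shows "norm (hfun p s z) \<le> Bseg b"
proof -
  note P = seg_props[OF b z]
  have Rz: "Re z > 0" using P(1) b kap by (smt (verit) mult_pos_pos)
  then have z0: "z \<noteq> 0" by auto
  have nzl: "\<kappa> * b \<le> norm z" using P(1) complex_Re_le_cmod[of z] by (simp add: mult.commute)
  have kb: "\<kappa> * b > 0" using kap b by simp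
  have h: "norm (hfun p s z) \<le> K * norm z powr Re s * exp (- Im s * Arg z) * exp (-(\<kappa>/2) * norm z)"
    using h_bound[OF p0 pq Kb, where z = z and s = s] P(3) z0 K0 by simp
  have t1: "norm z powr Re s \<le> (\<kappa> * b) powr Re s + b powr Re s"
  proof (cases "Re s \<ge> 0")
    case True
    then have "norm z powr Re s \<le> b powr Re s" using P(2) by (intro powr_mono2) auto
    then show ?thesis by (smt (verit) powr_ge_zero)
  next
    case False
    then have "norm z powr Re s \<le> (\<kappa> * b) powr Re s" using nzl kb by (intro powr_mono2') auto
    then show ?thesis by (smt (verit) powr_ge_zero)
  qed
  have t2: "exp (- Im s * Arg z) \<le> exp (\<bar>Im s\<bar> * pi)"
  proof -
    have "\<bar>Arg z\<bar> \<le> pi" using Arg_bounded[of z] by auto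
    then have "\<bar>Im s\<bar> * \<bar>Arg z\<bar> \<le> \<bar>Im s\<bar> * pi" by (intro mult_left_mono) auto
    moreover have "- Im s * Arg z \<le> \<bar>Im s\<bar> * \<bar>Arg z\<bar>"
      by (metis abs_ge_minus_self abs_mult mult_minus_left)
    ultimately show ?thesis by simp
  qed
  have t3: "exp (-(\<kappa>/2) * norm z) \<le> exp (- (\<kappa>/2) * (\<kappa> * b))"
    using nzl kap by simp
  have "K * norm z powr Re s * exp (- Im s * Arg z) * exp (-(\<kappa>/2) * norm z)
      \<le> K * ((\<kappa> * b) powr Re s + b powr Re s) * exp (\<bar>Im s\<bar> * pi) * exp (- (\<kappa>/2) * (\<kappa> * b))"
    using t1 t2 t3 K0 by (intro mult_mono) auto
  then show ?thesis using h unfolding Bseg_def by linarith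
qed

lemma seg_sub: "b > 0 \<Longrightarrow> closed_segment (of_real b) (of_real b * w) \<subseteq> {z. Re z > 0}"
  using seg_props kap by (smt (verit) mem_Collect_eq mult_pos_pos subsetI)

lemma seg_integrable: "b > 0 \<Longrightarrow> hfun p s contour_integrable_on linepath (of_real b) (of_real b * w)"
  by (intro contour_integrable_continuous_linepath continuous_on_subset[OF hfun_cont] seg_sub)

lemma seg_integral_bound:
  assumes b: "b > 0"
  shows "norm (contour_integral (linepath (of_real b) (of_real b * w)) (hfun p s)) \<le> Bseg b * (2 * b)"
proof -
  have "norm (contour_integral (linepath (of_real b) (of_real b * w)) (hfun p s)) \<le> Bseg b * norm (of_real b * w - of_real b)"
  proof (rule has_contour_integral_bound_linepath)
    show "(hfun p s has_contour_integral contour_integral (linepath (of_real b) (of_real b * w)) (hfun p s))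
        (linepath (of_real b) (of_real b * w))"
      by (rule has_contour_integral_integral[OF seg_integrable[OF b]])
    show "0 \<le> Bseg b" unfolding Bseg_def using K0 by simp
  qed (rule seg_h_bound[OF b])
  also have "\<dots> \<le> Bseg b * (2 * b)"
  proof (intro mult_left_mono)
    have "norm (of_real b * w - of_real b) \<le> norm (of_real b * w) + norm (of_real b :: complex)"
      by (rule norm_triangle_ineq4)
    then show "norm (of_real b * w - of_real b) \<le> 2 * b" using b w1 by (simp add: norm_mult)
    show "0 \<le> Bseg b" unfolding Bseg_def using K0 by simp
  qed
  finally show ?thesis .
qed

end

context rayctx
begin

lemma ray_segment_integral:
  assumes a: "0 < a" "a < b"
  shows "(Fray p s w has_integral contour_integral (linepath (of_real a * w) (of_real b * w)) (hfun p s)) {a..b}"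
proof -
  define I where "I = contour_integral (linepath (of_real a * w) (of_real b * w)) (hfun p s)"
  have sub: "closed_segment (of_real a * w) (of_real b * w) \<subseteq> {z. Re z > 0}"
    using a kap by (intro closed_segment_subset convex_halfspace_Re_gt) (auto intro: mult_pos_pos)
  have "(hfun p s has_contour_integral I) (linepath (of_real a * w) (of_real b * w))"
    unfolding I_def
    by (intro has_contour_integral_integral contour_integrable_continuous_linepath
          continuous_on_subset[OF hfun_cont] sub)
  then have "((\<lambda>x. hfun p s (linepath (of_real a * w) (of_real b * w) x) * (of_real b * w - of_real a * w)) has_integral I) {0..1}"
    by (simp add: has_contour_integral_linepath)
  also have "(\<lambda>x. hfun p s (linepath (of_real a * w) (of_real b * w) x) * (of_real b * w - of_real a * w)) =
      (\<lambda>x. (\<lambda>z. hfun p s (w * z) * w) (linepath (of_real a) (of_real b) x) * (of_real b - of_real a))"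
    by (rule ext) (simp add: linepath_def scaleR_conv_of_real algebra_simps)
  finally have "((\<lambda>z. hfun p s (w * z) * w) has_contour_integral I) (linepath (of_real a) (of_real b))"
    by (simp add: has_contour_integral_linepath)
  then have "((\<lambda>x. hfun p s (w * of_real x) * w) has_integral I) {Re (of_real a)..Re (of_real b)}"
    using a by (subst (asm) has_contour_integral_linepath_Reals_iff) auto
  then show ?thesis unfolding I_def Fray_def by simp
qed

lemma rot_identity:
  assumes a: "0 < a" "a < b"
  shows "integral {a..b} (Fray p s 1) - integral {a..b} (Fray p s w) =
    contour_integral (linepath (of_real a) (of_real a * w)) (hfun p s) - contour_integral (linepath (of_real b) (of_real b * w)) (hfun p s)"
proof -
  define A B C D where "A = complex_of_real a" "B = complex_of_real b" "C = B * w" "D = A * w"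
  define h where "h = hfun p s"
  define S where "S = {z::complex. Re z > 0}"
  have cS: "convex S" unfolding S_def by (rule convex_halfspace_Re_gt)
  have inS: "A \<in> S" "B \<in> S" "C \<in> S" "D \<in> S"
    using a kap by (auto simp: A_B_C_D_def S_def intro: mult_pos_pos)
  have ci: "h contour_integrable_on linepath X Y" if "X \<in> S" "Y \<in> S" for X Y
    unfolding h_def
    by (intro contour_integrable_continuous_linepath continuous_on_subset[OF hfun_cont])
       (use closed_segment_subset[OF that cS] in \<open>auto simp: S_def\<close>)
  have hc: "(h has_contour_integral contour_integral (linepath X Y) h) (linepath X Y)" if "X \<in> S" "Y \<in> S" for X Y
    by (rule has_contour_integral_integral[OF ci[OF that]])
  define P where "P = linepath A B +++ (linepath B C +++ (linepath C D +++ linepath D A))"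
  have "(h has_contour_integral (contour_integral (linepath A B) h + (contour_integral (linepath B C) h +
      (contour_integral (linepath C D) h + contour_integral (linepath D A) h)))) P"
    unfolding P_def
    by (intro has_contour_integral_join hc inS valid_path_join valid_path_linepath) auto
  moreover have "(h has_contour_integral 0) P"
  proof (rule Cauchy_theorem_convex_simple[OF _ cS])
    show "h holomorphic_on S" unfolding h_def S_def by (rule hfun_holo)
    show "valid_path P" unfolding P_def by (intro valid_path_join valid_path_linepath) auto
    show "path_image P \<subseteq> S" unfolding P_def
      using closed_segment_subset[OF _ _ cS] inS
      by (auto simp: path_image_join)
    show "pathfinish P = pathstart P" unfolding P_def by simp
  qed
  ultimately have sum0: "contour_integral (linepath A B) h + (contour_integral (linepath B C) h +
      (contour_integral (linepath C D) h + contour_integral (linepath D A) h)) = 0"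
    using has_contour_integral_unique by blast
  have I1: "contour_integral (linepath A B) h = integral {a..b} (Fray p s 1)"
    unfolding A_B_C_D_def h_def Fray_def using a
    by (subst contour_integral_linepath_Reals_eq) auto
  have I3: "contour_integral (linepath C D) h = - integral {a..b} (Fray p s w)"
  proof -
    have "contour_integral (linepath D C) h = integral {a..b} (Fray p s w)"
      using ray_segment_integral[OF a] unfolding A_B_C_D_def h_def by (simp add: integral_unique)
    moreover have "contour_integral (linepath C D) h = - contour_integral (linepath D C) h"
      by (rule contour_integral_reverse_linepath)
         (unfold h_def, intro continuous_on_subset[OF hfun_cont],
          use closed_segment_subset[OF inS(3) inS(4) cS] in \<open>auto simp: S_def\<close>)
    ultimately show ?thesis by simp
  qed
  have I4: "contour_integral (linepath D A) h = - contour_integral (linepath A D) h"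
    by (rule contour_integral_reverse_linepath)
       (unfold h_def, intro continuous_on_subset[OF hfun_cont],
        use closed_segment_subset[OF inS(4) inS(1) cS] in \<open>auto simp: S_def\<close>)
  show ?thesis using sum0 unfolding I1 I3 I4
    by (simp add: A_B_C_D_def h_def algebra_simps)
qed

end

context rayctx
begin

lemma seg_lim:
  assumes x: "\<And>n. x n > 0"
  assumes B: "((\<lambda>n. Bseg (x n) * (2 * x n)) \<longlongrightarrow> 0) sequentially"
  shows "((\<lambda>n. contour_integral (linepath (of_real (x n)) (of_real (x n) * w)) (hfun p s)) \<longlongrightarrow> 0) sequentially"
  by (rule Lim_null_comparison[OF _ B]) (use seg_integral_bound x in auto)

lemma Bseg_lim_top: "((\<lambda>n. Bseg (real (Suc n)) * (2 * real (Suc n))) \<longlongrightarrow> 0) sequentially"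
  unfolding Bseg_def using kap sig K0 by real_asymp

lemma Bseg_lim_0: "((\<lambda>n. Bseg (1 / real (Suc n)) * (2 * (1 / real (Suc n)))) \<longlongrightarrow> 0) sequentially"
  unfolding Bseg_def using kap sig K0 by real_asymp

lemma rotation: "integral {0<..} (Fray p s 1) = integral {0<..} (Fray p s w)"
proof -
  interpret r1: rayctx p s 1 \<kappa> K
    using p0 pq sig kap kap1 K0 Kb by unfold_locales auto
  define a b where "a = (\<lambda>n. 1 / real (Suc n))" "b = (\<lambda>n. real (Suc n))"
  have L1: "(\<lambda>n. integral {a n..b n} (Fray p s 1) - integral {a n..b n} (Fray p s w)) \<longlonglongrightarrow>
      integral {0<..} (Fray p s 1) - integral {0<..} (Fray p s w)"
    unfolding a_b_def by (intro tendsto_diff r1.Fray_lim Fray_lim)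
  have L2: "(\<lambda>n. contour_integral (linepath (of_real (a n)) (of_real (a n) * w)) (hfun p s)
      - contour_integral (linepath (of_real (b n)) (of_real (b n) * w)) (hfun p s)) \<longlonglongrightarrow> 0 - 0"
  proof (intro tendsto_diff)
    show "(\<lambda>n. contour_integral (linepath (of_real (a n)) (of_real (a n) * w)) (hfun p s)) \<longlonglongrightarrow> 0"
      by (rule seg_lim) (use Bseg_lim_0 in \<open>auto simp: a_b_def\<close>)
    show "(\<lambda>n. contour_integral (linepath (of_real (b n)) (of_real (b n) * w)) (hfun p s)) \<longlonglongrightarrow> 0"
      by (rule seg_lim) (use Bseg_lim_top in \<open>auto simp: a_b_def\<close>)
  qed
  have ev: "\<forall>\<^sub>F n in sequentially. contour_integral (linepath (of_real (a n)) (of_real (a n) * w)) (hfun p s)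
      - contour_integral (linepath (of_real (b n)) (of_real (b n) * w)) (hfun p s) =
      integral {a n..b n} (Fray p s 1) - integral {a n..b n} (Fray p s w)"
  proof (rule eventually_sequentiallyI[of 1])
    fix n :: nat assume n: "1 \<le> n"
    have "1 / real (Suc n) < 1" using n by (simp add: field_simps)
    moreover have "1 \<le> real (Suc n)" by simp
    ultimately have "a n < b n" unfolding a_b_def by linarith
    moreover have "0 < a n" unfolding a_b_def by simp
    ultimately show "contour_integral (linepath (of_real (a n)) (of_real (a n) * w)) (hfun p s)
      - contour_integral (linepath (of_real (b n)) (of_real (b n) * w)) (hfun p s) =
      integral {a n..b n} (Fray p s 1) - integral {a n..b n} (Fray p s w)"
      using rot_identity by simp
  qed
  have "(\<lambda>n. integral {a n..b n} (Fray p s 1) - integral {a n..b n} (Fray p s w)) \<longlonglongrightarrow> 0 - 0"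
    by (rule Lim_transform_eventually[OF L2 ev])
  with L1 have "integral {0<..} (Fray p s 1) - integral {0<..} (Fray p s w) = 0 - 0"
    using LIMSEQ_unique by blast
  then show ?thesis by simp
qed

lemma phi_bound:
  "norm (phi_star p s) \<le> K * exp (- Im s * Arg w) * integral {0<..} (\<lambda>x. x powr Re s * exp (- (\<kappa>/2) * x))"
proof -
  have "phi_star p s = integral {0<..} (Fray p s 1)"
    unfolding phi_star_def Fray_def hfun_def gfun_def
    by (intro integral_cong) (simp add: exp_of_real exp_minus mult_ac)
  also have "\<dots> = integral {0<..} (Fray p s w)" by (rule rotation)
  finally show ?thesis using Fray_integral_bound by simp
qed

end

theorem mainTheorem4:
  fixes p :: real
  assumes "0 < p" and "p \<le> 1 - p"
  shows "\<forall>\<sigma>::real. \<sigma> > -1 \<longrightarrow> (\<forall>\<epsilon>::real. \<epsilon> > 0 \<longrightarrow>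
    (\<lambda>t::real. norm (phi_star p (Complex \<sigma> t)))
      \<in> O[at_infinity](\<lambda>t. exp (- (pi / 2 - \<epsilon>) * \<bar>t\<bar>)))"
proof (intro allI impI)
  fix \<sigma> \<epsilon> :: real
  assume sig: "\<sigma> > -1" and eps: "\<epsilon> > 0"
  note p0 = assms(1) and pq = assms(2)
  define \<delta> where "\<delta> = min \<epsilon> (pi / 4)"
  define \<theta> where "\<theta> = pi / 2 - \<delta>"
  define \<kappa> where "\<kappa> = cos \<theta>"
  have d: "0 < \<delta>" "\<delta> \<le> pi / 4" "\<delta> \<le> \<epsilon>" using eps pi_gt_zero by (auto simp: \<delta>_def)
  have th: "pi / 4 \<le> \<theta>" "\<theta> < pi / 2" "pi / 2 - \<epsilon> \<le> \<theta>" using d by (auto simp: \<theta>_def)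
  have kap: "\<kappa> > 0" unfolding \<kappa>_def using th pi_gt_zero by (intro cos_gt_zero_pi) auto
  obtain K where K0: "K > 0" and Kb: "\<And>z. \<kappa> * norm z \<le> Re z \<Longrightarrow> norm (gfun p z) \<le> K * norm z * exp (-(\<kappa>/2) * norm z)"
    using g_bound[OF p0 pq kap] by blast
  define M where "M = integral {0<..} (\<lambda>x. x powr \<sigma> * exp (- (\<kappa>/2) * x))"
  have M0: "M \<ge> 0" unfolding M_def
    using G_integrable[of "Complex \<sigma> 0" "\<kappa>/2"] sig kap by (intro integral_nonneg) auto
  have bound: "norm (phi_star p (Complex \<sigma> t)) \<le> K * M * exp (- \<theta> * \<bar>t\<bar>)" for t
  proof (cases "t \<ge> 0")
    case True
    interpret rayctx p "Complex \<sigma> t" "cis \<theta>" \<kappa> K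
      using p0 pq sig kap K0 Kb by unfold_locales (auto simp: \<kappa>_def)
    have A: "Arg (cis \<theta>) = \<theta>" using th pi_gt_zero by (intro Arg_cis) auto
    show ?thesis using phi_bound True unfolding A M_def by (simp add: mult_ac)
  next
    case False
    interpret rayctx p "Complex \<sigma> t" "cis (- \<theta>)" \<kappa> K
      using p0 pq sig kap K0 Kb by unfold_locales (auto simp: \<kappa>_def)
    have A: "Arg (cis (- \<theta>)) = - \<theta>" using th pi_gt_zero by (intro Arg_cis) auto
    show ?thesis using phi_bound False unfolding A M_def by (simp add: mult_ac)
  qed
  show "(\<lambda>t::real. norm (phi_star p (Complex \<sigma> t))) \<in> O[at_infinity](\<lambda>t. exp (- (pi / 2 - \<epsilon>) * \<bar>t\<bar>))"
  proof (rule bigoI)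
    show "\<forall>\<^sub>F t in at_infinity. norm (norm (phi_star p (Complex \<sigma> t))) \<le> (K * M) * norm (exp (- (pi / 2 - \<epsilon>) * \<bar>t\<bar>))"
    proof (rule always_eventually, rule allI)
      fix t :: real
      have "- \<theta> * \<bar>t\<bar> \<le> - (pi / 2 - \<epsilon>) * \<bar>t\<bar>" using th by (intro mult_right_mono) auto
      then have "K * M * exp (- \<theta> * \<bar>t\<bar>) \<le> K * M * exp (- (pi / 2 - \<epsilon>) * \<bar>t\<bar>)"
        using K0 M0 by (intro mult_left_mono) auto
      then show "norm (norm (phi_star p (Complex \<sigma> t))) \<le> (K * M) * norm (exp (- (pi / 2 - \<epsilon>) * \<bar>t\<bar>))"
        using bound[of t] by simp
    qed
  qed
qed


end
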